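(* Let $X$ be a normal space and $i_X\colon A\hookrightarrow X$ a cofibration. Assume that $\{U_0,\ldots,U_n\}$ is an open cover of $X$ such that: $A\subseteq U_0$ and there is a homotopy $H_0\colon U_0\times[0,1]\to X$ with $H_0(x,0)=x$, $H_0(x,1)\in A$ for all $x\in U_0$, and the map $H_0(-,1)|_A\colon A\to A$ is homotopic to $1_A$; and for each $i\ge1$, $U_i\cap A=\varnothing$ and there is a homotopy $H_i\colon U_i\times[0,1]\to X$ with $H_i(x,0)=x$ and $H_i(x,1)\in A$ for all $x\in U_i$. Then $\mathrm{relcat}(i_X)\le n$.
   Context: Relative category (Doeraene–El Haouari): for a map $i_X\colon A\to X$, define Ganea maps $g_n\colon G_n(i_X)\to X$ inductively by $g_0=i_X$, and $G_n(i_X)$ the join of $i_X$ and $g_{n-1}$ over $X$, i.e. the homotopy pushout of the two projections from the homotopy pullback of $i_X$ and $g_{n-1}$, with $g_n$ the induced (whisker) map to $X$ and $\alpha_n\colon A\to G_n(i_X)$ the canonical map. Then $\mathrm{relcat}(i_X)$ is the least $n\ge0$ such that $g_n$ admits a homotopy section $\sigma\colon X\to G_n(i_X)$ with $\sigma\circ i_X\simeq\alpha_n$. *)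

theory Defs
  imports "HOL-Analysis.Analysis" "HOL-Library.Extended_Nat"
begin

definition hep_into :: "'a topology \<Rightarrow> 'a set \<Rightarrow> 'b topology \<Rightarrow> bool" where
  "hep_into X A Y \<longleftrightarrow>
     (\<forall>f h. continuous_map X Y f \<and>
            continuous_map (prod_topology (subtopology X A) (top_of_set {0..1::real})) Y h \<and>
            (\<forall>a\<in>A. h (a, 0) = f a)
       \<longrightarrow> (\<exists>H. continuous_map (prod_topology X (top_of_set {0..1::real})) Y H \<and>
                (\<forall>x\<in>topspace X. H (x, 0) = f x) \<and>
                (\<forall>a\<in>A. \<forall>t\<in>{0..1}. H (a, t) = h (a, t))))"

text \<open>The inclusion of A into X is a cofibration: HEP for all target spaces whose points
  live in the type of X times reals (this type is large enough to contain the mapping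
  cylinder, the universal test space, so this is equivalent to HEP for all spaces).\<close>
definition cofibration :: "'a topology \<Rightarrow> 'a set \<Rightarrow> bool" where
  "cofibration X A \<longleftrightarrow> A \<subseteq> topspace X \<and> (\<forall>Y :: ('a \<times> real) topology. hep_into X A Y)"

text \<open>Points of the Ganea spaces G_n: points of A (the A-end of the double mapping
  cylinder), points of G_(n-1) (the other end), and interior points of the cylinder on
  the homotopy pullback: (a, gamma, p, t) with 0 < t < 1.\<close>
datatype 'a gpt = Pt 'a | Up "'a gpt" | Mid 'a "real \<Rightarrow> 'a" "'a gpt" real

primrec gmap :: "'a gpt \<Rightarrow> 'a" where
  "gmap (Pt a) = a"
| "gmap (Up p) = gmap p"
| "gmap (Mid a \<gamma> p t) = \<gamma> t"

text \<open>Free path space of X with the compact-open topology (paths are normalised to be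
  undefined outside [0,1]).\<close>
definition paths_of :: "'a topology \<Rightarrow> (real \<Rightarrow> 'a) set" where
  "paths_of X = {\<gamma>. continuous_map (top_of_set {0..1::real}) X \<gamma> \<and> \<gamma> \<in> extensional {0..1}}"

definition path_top :: "'a topology \<Rightarrow> (real \<Rightarrow> 'a) topology" where
  "path_top X = topology_generated_by
     {{\<gamma> \<in> paths_of X. \<gamma> ` K \<subseteq> U} | K U. compact K \<and> K \<subseteq> {0..1} \<and> openin X U}"

definition hpb_top :: "'a topology \<Rightarrow> 'a set \<Rightarrow> 'a gpt topology
                        \<Rightarrow> ('a \<times> (real \<Rightarrow> 'a) \<times> 'a gpt) topology" where
  "hpb_top X A G = subtopology (prod_topology (subtopology X A) (prod_topology (path_top X) G))
      {(a, \<gamma>, p). \<gamma> 0 = a \<and> \<gamma> 1 = gmap p}"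

definition cyl_cls :: "('a \<times> (real \<Rightarrow> 'a) \<times> 'a gpt) \<times> real \<Rightarrow> 'a gpt" where
  "cyl_cls w = (case w of ((a, \<gamma>, p), t) \<Rightarrow>
      if t = 0 then Pt a else if t = 1 then Up p else Mid a \<gamma> p t)"

text \<open>Fibrewise join of the inclusion of A and gmap on G over X: the double mapping cylinder
  (homotopy pushout) of the two projections from the homotopy pullback, with the quotient
  topology of the disjoint union of A, (pullback x [0,1]) and G.  The family of open sets
  below is already a topology, so the generated topology is exactly this family.\<close>
definition join_top :: "'a topology \<Rightarrow> 'a set \<Rightarrow> 'a gpt topology \<Rightarrow> 'a gpt topology" where
  "join_top X A G = topology_generated_by
     {U. U \<subseteq> Pt ` A \<union> Up ` topspace G \<union> cyl_cls ` topspace (prod_topology (hpb_top X A G) (top_of_set {0..1::real}))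
       \<and> openin (subtopology X A) {a \<in> A. Pt a \<in> U}
       \<and> openin G {p \<in> topspace G. Up p \<in> U}
       \<and> openin (prod_topology (hpb_top X A G) (top_of_set {0..1::real}))
            {w \<in> topspace (prod_topology (hpb_top X A G) (top_of_set {0..1::real})). cyl_cls w \<in> U}}"

text \<open>The Ganea spaces G_n(i_X); G_0 is a copy of A (via Pt), and alpha_n = Pt.\<close>
primrec ganea_top :: "'a topology \<Rightarrow> 'a set \<Rightarrow> nat \<Rightarrow> 'a gpt topology" where
  "ganea_top X A 0 = topology_generated_by
      {U. U \<subseteq> Pt ` A \<and> openin (subtopology X A) {a \<in> A. Pt a \<in> U}}"
| "ganea_top X A (Suc n) = join_top X A (ganea_top X A n)"

definition ganea_section :: "'a topology \<Rightarrow> 'a set \<Rightarrow> nat \<Rightarrow> bool" where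
  "ganea_section X A n \<longleftrightarrow>
     (\<exists>\<sigma>. continuous_map X (ganea_top X A n) \<sigma> \<and>
          homotopic_with (\<lambda>_. True) X X (gmap \<circ> \<sigma>) id \<and>
          homotopic_with (\<lambda>_. True) (subtopology X A) (ganea_top X A n) \<sigma> Pt)"

definition relcat :: "'a topology \<Rightarrow> 'a set \<Rightarrow> enat" where
  "relcat X A = (INF n \<in> {n. ganea_section X A n}. enat n)"

end

theory Submission
  imports Defs
begin

lemma continuous_map_into_generated:
  assumes "\<And>z. z \<in> topspace Z \<Longrightarrow> g z \<in> \<Union>S"
    and "\<And>V. V \<in> S \<Longrightarrow> openin Z {z \<in> topspace Z. g z \<in> V}"
  shows "continuous_map Z (topology_generated_by S) g"
proof -
  have "openin Z {z \<in> topspace Z. g z \<in> U}" if "generate_topology_on S U" for U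
    using that
  proof induction
    case Empty
    then show ?case by simp
  next
    case (Int a b)
    have "{z \<in> topspace Z. g z \<in> a \<inter> b} = {z \<in> topspace Z. g z \<in> a} \<inter> {z \<in> topspace Z. g z \<in> b}" by auto
    then show ?case using Int by auto
  next
    case (UN K)
    have "{z \<in> topspace Z. g z \<in> \<Union>K} = (\<Union>k\<in>K. {z \<in> topspace Z. g z \<in> k})" by auto
    then show ?case using UN by auto
  next
    case (Basis s)
    then show ?case using assms(2) by blast
  qed
  then show ?thesis using assms(1)
    by (auto simp: continuous_map_def openin_topology_generated_by_iff)
qed

lemma glue:
  assumes "\<And>T. T \<in> \<T> \<Longrightarrow> openin Z T" "\<And>T. T \<in> \<T> \<Longrightarrow> continuous_map (subtopology Z T) Y g"
    "topspace Z \<subseteq> \<Union>\<T>"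
  shows "continuous_map Z Y g"
  by (rule pasting_lemma[where I=\<T> and T="\<lambda>T. T" and f="\<lambda>_. g"]) (use assms in auto)

lemma path_adjoint_cont:
  assumes F: "continuous_map (prod_topology Z (top_of_set {0..1::real})) X F"
  shows "continuous_map Z (path_top X) (\<lambda>z. restrict (\<lambda>u. F (z,u)) {0..1})"
  unfolding path_top_def
proof (rule continuous_map_into_generated)
  have pth: "restrict (\<lambda>u. F (z,u)) {0..1} \<in> paths_of X" if z: "z \<in> topspace Z" for z
  proof -
    have "continuous_map (top_of_set {0..1::real}) (prod_topology Z (top_of_set {0..1::real})) (\<lambda>u. (z,u))"
      using z by (intro continuous_map_pairedI continuous_map_const[THEN iffD2] continuous_map_id) auto
    then have "continuous_map (top_of_set {0..1::real}) X (F \<circ> (\<lambda>u. (z,u)))"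
      using F continuous_map_compose by blast
    then have "continuous_map (top_of_set {0..1::real}) X (restrict (\<lambda>u. F (z,u)) {0..1})"
      by (rule continuous_map_eq) auto
    then show ?thesis by (simp add: paths_of_def)
  qed
  fix z assume z: "z \<in> topspace Z"
  show "restrict (\<lambda>u. F (z,u)) {0..1} \<in> \<Union> {{\<gamma> \<in> paths_of X. \<gamma> ` K \<subseteq> U} | K U. compact K \<and> K \<subseteq> {0..1} \<and> openin X U}"
  proof (rule UnionI)
    show "{\<gamma> \<in> paths_of X. \<gamma> ` {} \<subseteq> topspace X} \<in> {{\<gamma> \<in> paths_of X. \<gamma> ` K \<subseteq> U} | K U. compact K \<and> K \<subseteq> {0..1} \<and> openin X U}"
      by blast
  qed (use pth[OF z] in auto)
next
  fix V assume "V \<in> {{\<gamma> \<in> paths_of X. \<gamma> ` K \<subseteq> U} | K U. compact K \<and> K \<subseteq> {0..1} \<and> openin X U}"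
  then obtain K U where V: "V = {\<gamma> \<in> paths_of X. \<gamma> ` K \<subseteq> U}" and K: "compact K" "K \<subseteq> {0..1}" and U: "openin X U"
    by blast
  have pth: "restrict (\<lambda>u. F (z,u)) {0..1} \<in> paths_of X" if z: "z \<in> topspace Z" for z
  proof -
    have "continuous_map (top_of_set {0..1::real}) (prod_topology Z (top_of_set {0..1::real})) (\<lambda>u. (z,u))"
      using z by (intro continuous_map_pairedI continuous_map_const[THEN iffD2] continuous_map_id) auto
    then have "continuous_map (top_of_set {0..1::real}) X (F \<circ> (\<lambda>u. (z,u)))"
      using F continuous_map_compose by blast
    then have "continuous_map (top_of_set {0..1::real}) X (restrict (\<lambda>u. F (z,u)) {0..1})"
      by (rule continuous_map_eq) auto
    then show ?thesis by (simp add: paths_of_def)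
  qed
  have eq: "{z \<in> topspace Z. restrict (\<lambda>u. F (z,u)) {0..1} \<in> V} = {z \<in> topspace Z. \<forall>u\<in>K. F (z,u) \<in> U}"
  proof -
    have "restrict (\<lambda>u. F (z,u)) {0..1} ` K \<subseteq> U \<longleftrightarrow> (\<forall>u\<in>K. F (z,u) \<in> U)" for z
      using K(2) by (auto simp: image_subset_iff subset_iff)
    then show ?thesis using pth by (auto simp: V)
  qed
  have W: "openin (prod_topology Z (top_of_set {0..1::real})) {p \<in> topspace (prod_topology Z (top_of_set {0..1::real})). F p \<in> U}"
    using openin_continuous_map_preimage[OF F U] .
  have Kc: "compactin (top_of_set {0..1::real}) K"
    using K by (simp add: compactin_subtopology)
  show "openin Z {z \<in> topspace Z. restrict (\<lambda>u. F (z,u)) {0..1} \<in> V}"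
    unfolding eq
  proof (subst openin_subopen, intro ballI)
    fix z assume "z \<in> {z \<in> topspace Z. \<forall>u\<in>K. F (z,u) \<in> U}"
    then have z: "z \<in> topspace Z" and zK: "\<forall>u\<in>K. F (z,u) \<in> U" by auto
    have "{z} \<times> K \<subseteq> {p \<in> topspace (prod_topology Z (top_of_set {0..1::real})). F p \<in> U}"
      using z zK K by auto
    from tube_lemma_right[OF W Kc z this] obtain U' V' where
      "openin Z U'" "openin (top_of_set {0..1::real}) V'" "z \<in> U'" "K \<subseteq> V'"
      "U' \<times> V' \<subseteq> {p \<in> topspace (prod_topology Z (top_of_set {0..1::real})). F p \<in> U}" by blast
    then show "\<exists>T. openin Z T \<and> z \<in> T \<and> T \<subseteq> {z \<in> topspace Z. \<forall>u\<in>K. F (z,u) \<in> U}"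
      by (intro exI[where x=U']) (auto dest: openin_subset)
  qed
qed

lemma join_full:
  assumes AX: "A \<subseteq> topspace X"
  shows "Pt ` A \<union> Up ` topspace G \<union> cyl_cls ` topspace (prod_topology (hpb_top X A G) (top_of_set {0..1::real}))
    \<in> {U. U \<subseteq> Pt ` A \<union> Up ` topspace G \<union> cyl_cls ` topspace (prod_topology (hpb_top X A G) (top_of_set {0..1::real}))
       \<and> openin (subtopology X A) {a \<in> A. Pt a \<in> U}
       \<and> openin G {p \<in> topspace G. Up p \<in> U}
       \<and> openin (prod_topology (hpb_top X A G) (top_of_set {0..1::real}))
            {w \<in> topspace (prod_topology (hpb_top X A G) (top_of_set {0..1::real})). cyl_cls w \<in> U}}"
proof -
  have 1: "{a \<in> A. Pt a \<in> Pt ` A \<union> Up ` topspace G \<union> cyl_cls ` topspace (prod_topology (hpb_top X A G) (top_of_set {0..1::real}))} = topspace (subtopology X A)"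
    using AX by auto
  have 2: "{p \<in> topspace G. Up p \<in> Pt ` A \<union> Up ` topspace G \<union> cyl_cls ` topspace (prod_topology (hpb_top X A G) (top_of_set {0..1::real}))} = topspace G"
    by auto
  have 3: "{w \<in> topspace (prod_topology (hpb_top X A G) (top_of_set {0..1::real})). cyl_cls w \<in> Pt ` A \<union> Up ` topspace G \<union> cyl_cls ` topspace (prod_topology (hpb_top X A G) (top_of_set {0..1::real}))}
     = topspace (prod_topology (hpb_top X A G) (top_of_set {0..1::real}))"
    by auto
  show ?thesis by (simp only: mem_Collect_eq 1 2 3 openin_topspace) simp
qed

lemma Pt_cont_join:
  assumes AX: "A \<subseteq> topspace X"
  shows "continuous_map (subtopology X A) (join_top X A G) Pt"
  unfolding join_top_def
proof (rule continuous_map_into_generated)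
  fix z assume that: "z \<in> topspace (subtopology X A)"
  then show "Pt z \<in> \<Union> {U. U \<subseteq> Pt ` A \<union> Up ` topspace G \<union> cyl_cls ` topspace (prod_topology (hpb_top X A G) (top_of_set {0..1::real}))
       \<and> openin (subtopology X A) {a \<in> A. Pt a \<in> U}
       \<and> openin G {p \<in> topspace G. Up p \<in> U}
       \<and> openin (prod_topology (hpb_top X A G) (top_of_set {0..1::real}))
            {w \<in> topspace (prod_topology (hpb_top X A G) (top_of_set {0..1::real})). cyl_cls w \<in> U}}"
    using that by (intro UnionI[OF join_full[OF AX]]) auto
next
  fix V assume "V \<in> {U. U \<subseteq> Pt ` A \<union> Up ` topspace G \<union> cyl_cls ` topspace (prod_topology (hpb_top X A G) (top_of_set {0..1::real}))
       \<and> openin (subtopology X A) {a \<in> A. Pt a \<in> U}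
       \<and> openin G {p \<in> topspace G. Up p \<in> U}
       \<and> openin (prod_topology (hpb_top X A G) (top_of_set {0..1::real}))
            {w \<in> topspace (prod_topology (hpb_top X A G) (top_of_set {0..1::real})). cyl_cls w \<in> U}}"
  moreover have "{z \<in> topspace (subtopology X A). Pt z \<in> V} = {a \<in> A. Pt a \<in> V}" using AX by auto
  ultimately show "openin (subtopology X A) {z \<in> topspace (subtopology X A). Pt z \<in> V}" by simp
qed

lemma Up_cont_join:
  assumes AX: "A \<subseteq> topspace X"
  shows "continuous_map G (join_top X A G) Up"
  unfolding join_top_def
proof (rule continuous_map_into_generated)
  fix z assume that: "z \<in> topspace G"
  then show "Up z \<in> \<Union> {U. U \<subseteq> Pt ` A \<union> Up ` topspace G \<union> cyl_cls ` topspace (prod_topology (hpb_top X A G) (top_of_set {0..1::real}))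
       \<and> openin (subtopology X A) {a \<in> A. Pt a \<in> U}
       \<and> openin G {p \<in> topspace G. Up p \<in> U}
       \<and> openin (prod_topology (hpb_top X A G) (top_of_set {0..1::real}))
            {w \<in> topspace (prod_topology (hpb_top X A G) (top_of_set {0..1::real})). cyl_cls w \<in> U}}"
    using that by (intro UnionI[OF join_full[OF AX]]) auto
qed auto

lemma cyl_cont_join:
  assumes AX: "A \<subseteq> topspace X"
  shows "continuous_map (prod_topology (hpb_top X A G) (top_of_set {0..1::real})) (join_top X A G) cyl_cls"
  unfolding join_top_def
proof (rule continuous_map_into_generated)
  fix z assume that: "z \<in> topspace (prod_topology (hpb_top X A G) (top_of_set {0..1::real}))"
  then show "cyl_cls z \<in> \<Union> {U. U \<subseteq> Pt ` A \<union> Up ` topspace G \<union> cyl_cls ` topspace (prod_topology (hpb_top X A G) (top_of_set {0..1::real}))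
       \<and> openin (subtopology X A) {a \<in> A. Pt a \<in> U}
       \<and> openin G {p \<in> topspace G. Up p \<in> U}
       \<and> openin (prod_topology (hpb_top X A G) (top_of_set {0..1::real}))
            {w \<in> topspace (prod_topology (hpb_top X A G) (top_of_set {0..1::real})). cyl_cls w \<in> U}}"
    using that by (intro UnionI[OF join_full[OF AX]]) auto
qed auto

lemma Pt_cont_0:
  assumes AX: "A \<subseteq> topspace X"
  shows "continuous_map (subtopology X A) (ganea_top X A 0) Pt"
  unfolding ganea_top.simps
proof (rule continuous_map_into_generated)
  have 1: "{a \<in> A. Pt a \<in> Pt ` A} = topspace (subtopology X A)" using AX by auto
  have "Pt ` A \<in> {U. U \<subseteq> Pt ` A \<and> openin (subtopology X A) {a \<in> A. Pt a \<in> U}}"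
    by (simp only: mem_Collect_eq 1 openin_topspace) simp
  then show "Pt z \<in> \<Union> {U. U \<subseteq> Pt ` A \<and> openin (subtopology X A) {a \<in> A. Pt a \<in> U}}"
    if "z \<in> topspace (subtopology X A)" for z
    using that by (intro UnionI) auto
next
  fix V assume "V \<in> {U. U \<subseteq> Pt ` A \<and> openin (subtopology X A) {a \<in> A. Pt a \<in> U}}"
  moreover have "{z \<in> topspace (subtopology X A). Pt z \<in> V} = {a \<in> A. Pt a \<in> V}" using AX by auto
  ultimately show "openin (subtopology X A) {z \<in> topspace (subtopology X A). Pt z \<in> V}" by simp
qed

lemma sub_prod:
  assumes "P \<subseteq> V"
  shows "subtopology (prod_topology (subtopology X V) (top_of_set {0..1::real})) (P \<times> {0..1})
       = prod_topology (subtopology X P) (top_of_set {0..1::real})"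
  using assms by (simp add: subtopology_Times[symmetric] subtopology_subtopology Int_absorb1 Times_Int_Times
      flip: subtopology_Times)

lemma restrict_prod_cont:
  assumes "continuous_map (prod_topology (subtopology X U) (top_of_set {0..1::real})) Y H" "P \<subseteq> U"
  shows "continuous_map (prod_topology (subtopology X P) (top_of_set {0..1::real})) Y H"
  using continuous_map_from_subtopology[OF assms(1), of "P \<times> {0..1}"] sub_prod[OF assms(2)] by simp

lemma pair_into:
  assumes "continuous_map W (subtopology X R) f" "R \<subseteq> U" "continuous_map W euclideanreal h"
    "\<And>w. w \<in> topspace W \<Longrightarrow> h w \<in> {0..1}"
  shows "continuous_map W (prod_topology (subtopology X U) (top_of_set {0..1::real})) (\<lambda>w. (f w, h w))"
proof (intro continuous_map_pairedI)
  show "continuous_map W (subtopology X U) f"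
    using assms(1,2) unfolding continuous_map_in_subtopology by auto
  show "continuous_map W (top_of_set {0..1}) h"
    using assms(3,4) by (auto simp: continuous_map_in_subtopology)
qed

lemma slice_cont:
  assumes "continuous_map (prod_topology (subtopology X U) (top_of_set {0..1::real})) Y H" "P \<subseteq> U" "r \<in> {0..1}"
  shows "continuous_map (subtopology X P) Y (\<lambda>x. H (x, r))"
proof -
  have "continuous_map (subtopology X P) (prod_topology (subtopology X U) (top_of_set {0..1::real})) (\<lambda>x. (id x, r))"
    by (rule pair_into[OF _ assms(2)]) (use assms(3) in auto)
  from continuous_map_compose[OF this assms(1)] show ?thesis by (simp add: o_def)
qed

lemma join_step:
  fixes H K' :: "'a \<times> real \<Rightarrow> 'a" and s' :: "'a \<Rightarrow> 'a gpt"
  assumes nX: "normal_space X" and AX: "A \<subseteq> topspace X"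
    and U: "openin X U"
    and Hc: "continuous_map (prod_topology (subtopology X U) (top_of_set {0..1::real})) X H"
    and H01: "\<forall>x\<in>U. H(x,0) = x \<and> H(x,1) \<in> A"
    and O': "openin X O'"
    and s'c: "continuous_map (subtopology X O') G s'"
    and K'c: "continuous_map (prod_topology (subtopology X O') (top_of_set {0..1::real})) X K'"
    and K'01: "\<forall>x\<in>O'. K'(x,0) = x \<and> K'(x,1) = gmap (s' x)"
    and F: "closedin X F" "F \<subseteq> O'" and C: "closedin X C" "C \<subseteq> U"
  shows "\<exists>V s K. openin X V \<and> C \<union> F \<subseteq> V \<and> V \<subseteq> U \<union> O' \<and>
     continuous_map (subtopology X V) (join_top X A G) s \<and>
     continuous_map (prod_topology (subtopology X V) (top_of_set {0..1::real})) X K \<and>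
     (\<forall>x\<in>V. K(x,0) = x \<and> K(x,1) = gmap (s x)) \<and> (\<forall>x\<in>V. x \<notin> O' \<longrightarrow> s x = Pt (H(x,1)))"
proof -
  have cl: "closedin X (topspace X - O')" using O' by (simp add: closedin_diff)
  have dj: "disjnt F (topspace X - O')" using F by (auto simp: disjnt_def)
  obtain t where tc: "continuous_map X euclideanreal t" and tF: "t ` F \<subseteq> {1}"
    and tO: "t ` (topspace X - O') \<subseteq> {0}"
    using Urysohn_lemma_alt[OF nX F(1) cl dj, of 1 0] by blast
  define \<tau> where "\<tau> x = max 0 (min 1 (3 * t x - 1))" for x
  have \<tau>c: "continuous_map X euclideanreal \<tau>"
    unfolding \<tau>_def by (intro continuous_intros tc)
  have \<tau>01: "\<tau> x \<in> {0..1}" for x by (auto simp: \<tau>_def)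
  define P where "P = {x \<in> topspace X. t x \<in> {..<1/3}} \<inter> U"
  define Q where "Q = {x \<in> topspace X. t x \<in> {2/3<..}} \<inter> O'"
  define R where "R = U \<inter> O'"
  define V where "V = P \<union> Q \<union> R"
  have oP: "openin X P" unfolding P_def
    by (intro openin_Int U openin_continuous_map_preimage[OF tc]) auto
  have oQ: "openin X Q" unfolding Q_def
    by (intro openin_Int O' openin_continuous_map_preimage[OF tc]) auto
  have oR: "openin X R" unfolding R_def using U O' by auto
  have oV: "openin X V" unfolding V_def using oP oQ oR by auto
  have PU: "P \<subseteq> U" and QO: "Q \<subseteq> O'" and RU: "R \<subseteq> U" and RO: "R \<subseteq> O'"
    by (auto simp: P_def Q_def R_def)
  have UX: "U \<subseteq> topspace X" using U openin_subset by blast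
  have OX: "O' \<subseteq> topspace X" using O' openin_subset by blast
  have \<tau>P: "\<tau> x = 0" if "x \<in> P" for x using that by (auto simp: P_def \<tau>_def)
  have \<tau>Q: "\<tau> x = 1" if "x \<in> Q" for x using that by (auto simp: Q_def \<tau>_def)
  have t0: "t x = 0" if "x \<in> topspace X" "x \<notin> O'" for x using that tO by auto
  have CFV: "C \<union> F \<subseteq> V"
  proof
    fix x assume "x \<in> C \<union> F"
    then show "x \<in> V"
    proof
      assume xC: "x \<in> C"
      then have "x \<in> U" "x \<in> topspace X" using C UX by auto
      then show ?thesis using t0[of x] by (cases "x \<in> O'") (auto simp: V_def P_def R_def)
    next
      assume xF: "x \<in> F"
      then have "t x = 1" "x \<in> O'" "x \<in> topspace X" using tF F OX by auto
      then show ?thesis by (auto simp: V_def Q_def)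
    qed
  qed
  have VUO: "V \<subseteq> U \<union> O'" by (auto simp: V_def P_def Q_def R_def)
  have VX: "V \<subseteq> topspace X" using VUO UX OX by auto
  define \<Phi> where "\<Phi> x v = (if v = 0 then x else if v < 0 then H(x,-v) else K'(x,v))" for x v
  define \<gamma> where "\<gamma> x = restrict (\<lambda>u. \<Phi> x (2*u-1)) {0..1}" for x
  define s where "s x = cyl_cls ((H(x,1), \<gamma> x, s' x), \<tau> x)" for x
  define K where "K p = \<Phi> (fst p) (snd p * (2 * \<tau> (fst p) - 1))" for p
  have sP: "s x = Pt (H(x,1))" if "x \<in> P" for x using \<tau>P[OF that] by (simp add: s_def cyl_cls_def)
  have sQ: "s x = Up (s' x)" if "x \<in> Q" for x using \<tau>Q[OF that] by (simp add: s_def cyl_cls_def)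
  have K0: "K(x,0) = x" for x by (simp add: K_def \<Phi>_def)
  have K1: "K(x,1) = gmap (s x)" if "x \<in> V" for x
  proof -
    consider "\<tau> x = 0" | "\<tau> x = 1" | "0 < \<tau> x" "\<tau> x < 1" using \<tau>01[of x] by force
    then show ?thesis
    proof cases
      case 1 then show ?thesis by (simp add: K_def \<Phi>_def s_def cyl_cls_def)
    next
      case 2
      have "x \<notin> P" using \<tau>P 2 by force
      then have "x \<in> O'" using that QO RO unfolding V_def by blast
      then show ?thesis using 2 K'01 by (simp add: K_def \<Phi>_def s_def cyl_cls_def)
    next
      case 3 then show ?thesis by (simp add: K_def \<Phi>_def s_def cyl_cls_def \<gamma>_def)
    qed
  qed
  have last: "s x = Pt (H(x,1))" if "x \<in> V" "x \<notin> O'" for x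
    using that VX t0[of x] by (intro sP) (auto simp: V_def P_def Q_def R_def)
  have \<Phi>c: "continuous_map (prod_topology (subtopology X R) (top_of_set {0..1::real})) X (\<lambda>p. \<Phi> (fst p) (g p))"
    if gc: "continuous_map (prod_topology (subtopology X R) (top_of_set {0..1::real})) euclideanreal g"
      and g1: "\<And>p. p \<in> topspace (prod_topology (subtopology X R) (top_of_set {0..1::real})) \<Longrightarrow> g p \<in> {-1..1}"
    for g
  proof -
    let ?Z = "prod_topology (subtopology X R) (top_of_set {0..1::real})"
    have fstc: "continuous_map (subtopology ?Z S) (subtopology X R) fst" for S
      by (rule continuous_map_from_subtopology[OF continuous_map_fst])
    have "continuous_map ?Z X (\<lambda>p. if g p \<le> 0 then H(fst p, - g p) else K'(fst p, g p))"
    proof (rule continuous_map_cases_le[OF gc continuous_map_const[THEN iffD2]])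
      show "continuous_map (subtopology ?Z {p \<in> topspace ?Z. g p \<le> 0}) X (\<lambda>p. H(fst p, - g p))"
      proof -
        have "continuous_map (subtopology ?Z {p \<in> topspace ?Z. g p \<le> 0}) (prod_topology (subtopology X U) (top_of_set {0..1::real})) (\<lambda>p. (fst p, - g p))"
        proof (rule pair_into[OF fstc RU])
          show "continuous_map (subtopology ?Z {p \<in> topspace ?Z. g p \<le> 0}) euclideanreal (\<lambda>p. - g p)"
            by (intro continuous_intros continuous_map_from_subtopology gc)
          fix p assume "p \<in> topspace (subtopology ?Z {p \<in> topspace ?Z. g p \<le> 0})"
          then have "p \<in> topspace ?Z" "g p \<le> 0" by auto
          then show "- g p \<in> {0..1}" using g1 by force
        qed
        from continuous_map_compose[OF this Hc] show ?thesis by (simp add: o_def)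
      qed
      show "continuous_map (subtopology ?Z {p \<in> topspace ?Z. 0 \<le> g p}) X (\<lambda>p. K'(fst p, g p))"
      proof -
        have "continuous_map (subtopology ?Z {p \<in> topspace ?Z. 0 \<le> g p}) (prod_topology (subtopology X O') (top_of_set {0..1::real})) (\<lambda>p. (fst p, g p))"
        proof (rule pair_into[OF fstc RO])
          show "continuous_map (subtopology ?Z {p \<in> topspace ?Z. 0 \<le> g p}) euclideanreal (\<lambda>p. g p)"
            by (intro continuous_intros continuous_map_from_subtopology gc)
          fix p assume "p \<in> topspace (subtopology ?Z {p \<in> topspace ?Z. 0 \<le> g p})"
          then have "p \<in> topspace ?Z" "0 \<le> g p" by auto
          then show "g p \<in> {0..1}" using g1 by force
        qed
        from continuous_map_compose[OF this K'c] show ?thesis by (simp add: o_def)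
      qed
      show "H (fst p, - g p) = K' (fst p, g p)" if "p \<in> topspace ?Z" "g p = 0" for p
        using that H01 K'01 RU RO by (auto simp: R_def)
    qed auto
    then show ?thesis
      by (rule continuous_map_eq) (use H01 K'01 in \<open>auto simp: \<Phi>_def R_def\<close>)
  qed
  have sndc: "continuous_map (prod_topology Z (top_of_set {0..1::real})) euclideanreal snd" for Z :: "'a topology"
    by (rule continuous_map_into_fulltopology[OF continuous_map_snd])
  have \<tau>fst: "continuous_map (prod_topology (subtopology X S) Y) euclideanreal (\<lambda>p. \<tau> (fst p))" for S and Y :: "real topology"
    using continuous_map_compose[OF continuous_map_fst continuous_map_from_subtopology[OF \<tau>c, of S]]
    by (simp add: o_def)
  have sc: "continuous_map (subtopology X V) (join_top X A G) s"
  proof (rule glue[where \<T>="{P,Q,R}"])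
    show "openin (subtopology X V) T" if "T \<in> {P,Q,R}" for T
    proof -
      have "openin X T" using that oP oQ oR by blast
      moreover have "T \<subseteq> V" using that unfolding V_def by blast
      ultimately show ?thesis by (rule subset_openin_subtopology)
    qed
    show "topspace (subtopology X V) \<subseteq> \<Union> {P, Q, R}" by (auto simp: V_def)
    show "continuous_map (subtopology (subtopology X V) T) (join_top X A G) s" if Tin: "T \<in> {P,Q,R}" for T
    proof -
      have TV: "subtopology (subtopology X V) T = subtopology X T"
      proof -
        have "V \<inter> T = T" using Tin by (auto simp: V_def)
        then show ?thesis by (simp add: subtopology_subtopology)
      qed
      have "continuous_map (subtopology X T) (join_top X A G) s"
      proof -
        consider "T = P" | "T = Q" | "T = R" using Tin by blast
        then show ?thesis
        proof cases
          case 1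
          have "continuous_map (subtopology X P) (subtopology X A) (\<lambda>x. H(x,1))"
            using slice_cont[OF Hc PU, of 1] H01 PU unfolding continuous_map_in_subtopology by auto
          from continuous_map_compose[OF this Pt_cont_join[OF AX]]
          have "continuous_map (subtopology X P) (join_top X A G) (Pt \<circ> (\<lambda>x. H(x,1)))" .
          then show ?thesis unfolding 1 by (rule continuous_map_eq) (simp add: sP)
        next
          case 2
          from continuous_map_compose[OF continuous_map_from_subtopology_mono[OF s'c QO] Up_cont_join[OF AX]]
          show ?thesis unfolding 2 by (rule continuous_map_eq) (simp add: sQ)
        next
          case 3
          have a: "continuous_map (subtopology X R) (subtopology X A) (\<lambda>x. H(x,1))"
            using slice_cont[OF Hc RU, of 1] H01 RU unfolding continuous_map_in_subtopology by auto
          have F: "continuous_map (prod_topology (subtopology X R) (top_of_set {0..1::real})) X (\<lambda>p. \<Phi> (fst p) (2 * snd p - 1))"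
            by (rule \<Phi>c) (auto intro!: continuous_intros sndc)
          have g: "continuous_map (subtopology X R) (path_top X) \<gamma>"
            using path_adjoint_cont[OF F] by (simp add: \<gamma>_def[abs_def])
          have s'R: "continuous_map (subtopology X R) G s'"
            by (rule continuous_map_from_subtopology_mono[OF s'c RO])
          have hp: "continuous_map (subtopology X R) (hpb_top X A G) (\<lambda>x. (H(x,1), \<gamma> x, s' x))"
            unfolding hpb_top_def continuous_map_in_subtopology
            by (intro conjI continuous_map_pairedI a g s'R) (use K'01 RO in \<open>auto simp: \<gamma>_def \<Phi>_def\<close>)
          have tI: "continuous_map (subtopology X R) (top_of_set {0..1}) \<tau>"
            unfolding continuous_map_in_subtopology
            using continuous_map_from_subtopology[OF \<tau>c] \<tau>01 by auto
          have w: "continuous_map (subtopology X R) (prod_topology (hpb_top X A G) (top_of_set {0..1::real})) (\<lambda>x. ((H(x,1), \<gamma> x, s' x), \<tau> x))"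
            by (intro continuous_map_pairedI hp tI)
          from continuous_map_compose[OF w cyl_cont_join[OF AX]]
          show ?thesis unfolding 3 by (simp add: o_def s_def[abs_def])
        qed
      qed
      then show ?thesis using TV by simp
    qed
  qed
  have KP: "continuous_map (prod_topology (subtopology X P) (top_of_set {0..1::real})) X K"
  proof -
    have "continuous_map (prod_topology (subtopology X P) (top_of_set {0..1::real})) X H"
      by (rule restrict_prod_cont[OF Hc PU])
    then show ?thesis
    proof (rule continuous_map_eq)
      fix p assume "p \<in> topspace (prod_topology (subtopology X P) (top_of_set {0..1::real}))"
      then obtain x r where p: "p = (x,r)" "x \<in> P" "0 \<le> r" by auto
      have "K p = \<Phi> x (- r)" using \<tau>P[OF p(2)] by (simp add: K_def p(1))
      also have "\<dots> = H (x, r)"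
        using p H01 PU by (cases "r = 0") (auto simp: \<Phi>_def)
      finally show "H p = K p" by (simp add: p(1))
    qed
  qed
  have KQ: "continuous_map (prod_topology (subtopology X Q) (top_of_set {0..1::real})) X K"
  proof -
    have "continuous_map (prod_topology (subtopology X Q) (top_of_set {0..1::real})) X K'"
      by (rule restrict_prod_cont[OF K'c QO])
    then show ?thesis
    proof (rule continuous_map_eq)
      fix p assume "p \<in> topspace (prod_topology (subtopology X Q) (top_of_set {0..1::real}))"
      then obtain x r where p: "p = (x,r)" "x \<in> Q" "0 \<le> r" by auto
      have "K p = \<Phi> x r" using \<tau>Q[OF p(2)] by (simp add: K_def p(1))
      also have "\<dots> = K' (x, r)"
        using p K'01 QO by (cases "r = 0") (auto simp: \<Phi>_def)
      finally show "K' p = K p" by (simp add: p(1))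
    qed
  qed
  have KR: "continuous_map (prod_topology (subtopology X R) (top_of_set {0..1::real})) X K"
    unfolding K_def
  proof (rule \<Phi>c)
    show "continuous_map (prod_topology (subtopology X R) (top_of_set {0..1})) euclideanreal (\<lambda>p. snd p * (2 * \<tau> (fst p) - 1))"
      by (intro continuous_intros sndc \<tau>fst)
    fix p assume "p \<in> topspace (prod_topology (subtopology X R) (top_of_set {0..1::real}))"
    then have s0: "0 \<le> snd p" "snd p \<le> 1" by auto
    have c: "-1 \<le> 2 * \<tau> (fst p) - 1" "2 * \<tau> (fst p) - 1 \<le> 1" using \<tau>01[of "fst p"] by auto
    have "snd p * (2 * \<tau> (fst p) - 1) \<le> snd p * 1" by (rule mult_left_mono) (use s0 c in auto)
    moreover have "snd p * (-1) \<le> snd p * (2 * \<tau> (fst p) - 1)" by (rule mult_left_mono) (use s0 c in auto)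
    ultimately show "snd p * (2 * \<tau> (fst p) - 1) \<in> {-1..1}" using s0 by auto
  qed
  have Kc: "continuous_map (prod_topology (subtopology X V) (top_of_set {0..1::real})) X K"
  proof (rule glue[where \<T>="(\<lambda>T0. T0 \<times> {0..1}) ` {P,Q,R}"])
    fix T assume "T \<in> (\<lambda>T0. T0 \<times> {0..1::real}) ` {P,Q,R}"
    then obtain T0 where T0: "T0 \<in> {P,Q,R}" "T = T0 \<times> {0..1}" by (rule imageE) simp
    have "openin X T0" using T0(1) oP oQ oR by blast
    moreover have T0V: "T0 \<subseteq> V" using T0(1) unfolding V_def by blast
    ultimately have o: "openin (subtopology X V) T0" by (rule subset_openin_subtopology)
    have i: "openin (top_of_set {0..1::real}) {0..1}"
      using openin_topspace[of "top_of_set {0..1::real}"] by simp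
    show "openin (prod_topology (subtopology X V) (top_of_set {0..1::real})) T"
      unfolding T0(2) openin_prod_Times_iff using o i by blast
    have "subtopology (prod_topology (subtopology X V) (top_of_set {0..1::real})) T
                = prod_topology (subtopology X T0) (top_of_set {0..1::real})"
      unfolding T0(2) using T0V by (rule sub_prod)
    moreover have "continuous_map (prod_topology (subtopology X T0) (top_of_set {0..1::real})) X K"
      using T0(1) KP KQ KR by blast
    ultimately show "continuous_map (subtopology (prod_topology (subtopology X V) (top_of_set {0..1::real})) T) X K"
      by simp
  next
    show "topspace (prod_topology (subtopology X V) (top_of_set {0..1::real})) \<subseteq> \<Union> ((\<lambda>T0. T0 \<times> {0..1}) ` {P,Q,R})"
    proof
      fix p assume "p \<in> topspace (prod_topology (subtopology X V) (top_of_set {0..1::real}))"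
      then have p: "fst p \<in> V" "snd p \<in> {0..1}" by (auto simp: topspace_prod_topology)
      then have "p \<in> P \<times> {0..1} \<or> p \<in> Q \<times> {0..1} \<or> p \<in> R \<times> {0..1}"
        unfolding V_def by (cases p) simp
      then show "p \<in> \<Union> ((\<lambda>T0. T0 \<times> {0..1}) ` {P,Q,R})" by blast
    qed
  qed
  show ?thesis
  proof (intro exI[where x=V] exI[where x=s] exI[where x=K] conjI)
    show "\<forall>x\<in>V. K (x, 0) = x \<and> K (x, 1) = gmap (s x)" using K0 K1 by simp
    show "\<forall>x\<in>V. x \<notin> O' \<longrightarrow> s x = Pt (H (x, 1))" using last by blast
  qed (fact oV CFV VUO sc Kc)+
qed

theorem lemma3p6:
  fixes X :: "'a topology" and A :: "'a set" and U :: "nat \<Rightarrow> 'a set" and n :: nat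
  assumes "normal_space X"
    and "cofibration X A"
    and "\<And>i. i \<le> n \<Longrightarrow> openin X (U i)"
    and "(\<Union>i\<le>n. U i) = topspace X"
    and "A \<subseteq> U 0"
    and "\<exists>H0. continuous_map (prod_topology (subtopology X (U 0)) (top_of_set {0..1::real})) X H0 \<and>
              (\<forall>x\<in>U 0. H0 (x, 0) = x \<and> H0 (x, 1) \<in> A) \<and>
              homotopic_with (\<lambda>_. True) (subtopology X A) (subtopology X A) (\<lambda>a. H0 (a, 1)) id"
    and "\<And>i. 1 \<le> i \<Longrightarrow> i \<le> n \<Longrightarrow> U i \<inter> A = {} \<and>
            (\<exists>Hi. continuous_map (prod_topology (subtopology X (U i)) (top_of_set {0..1::real})) X Hi \<and>
                  (\<forall>x\<in>U i. Hi (x, 0) = x \<and> Hi (x, 1) \<in> A))"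
  shows "relcat X A \<le> enat n"
proof -
  have nX: "normal_space X" by (rule assms(1))
  have AX: "A \<subseteq> topspace X" using assms(2) unfolding cofibration_def by blast
  obtain H0 where H0c: "continuous_map (prod_topology (subtopology X (U 0)) (top_of_set {0..1::real})) X H0"
    and H001: "\<forall>x\<in>U 0. H0 (x, 0) = x \<and> H0 (x, 1) \<in> A"
    and H0h: "homotopic_with (\<lambda>_. True) (subtopology X A) (subtopology X A) (\<lambda>a. H0 (a, 1)) id"
    using assms(6) by blast
  have "\<forall>i. \<exists>H. 1 \<le> i \<and> i \<le> n \<longrightarrow> continuous_map (prod_topology (subtopology X (U i)) (top_of_set {0..1::real})) X H \<and>
                  (\<forall>x\<in>U i. H (x, 0) = x \<and> H (x, 1) \<in> A)"
  proof
    fix i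
    show "\<exists>H. 1 \<le> i \<and> i \<le> n \<longrightarrow> continuous_map (prod_topology (subtopology X (U i)) (top_of_set {0..1::real})) X H \<and>
                  (\<forall>x\<in>U i. H (x, 0) = x \<and> H (x, 1) \<in> A)"
    proof (cases "1 \<le> i \<and> i \<le> n")
      case True
      then show ?thesis using assms(7)[of i] by blast
    next
      case False
      then show ?thesis by blast
    qed
  qed
  from choice[OF this] obtain HH' where HH0: "\<forall>i. 1 \<le> i \<and> i \<le> n \<longrightarrow> continuous_map (prod_topology (subtopology X (U i)) (top_of_set {0..1::real})) X (HH' i) \<and>
                  (\<forall>x\<in>U i. HH' i (x, 0) = x \<and> HH' i (x, 1) \<in> A)"
    by blast
  have HH': "continuous_map (prod_topology (subtopology X (U i)) (top_of_set {0..1::real})) X (HH' i) \<and>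
                  (\<forall>x\<in>U i. HH' i (x, 0) = x \<and> HH' i (x, 1) \<in> A)" if "1 \<le> i" "i \<le> n" for i
    using HH0 that by blast
  define HH where "HH i = (if i = 0 then H0 else HH' i)" for i
  have HHc: "continuous_map (prod_topology (subtopology X (U i)) (top_of_set {0..1::real})) X (HH i)"
    and HH01: "\<forall>x\<in>U i. HH i (x, 0) = x \<and> HH i (x, 1) \<in> A" if "i \<le> n" for i
    using HH'[of i] H0c H001 that by (auto simp: HH_def)
  have Uo: "openin X (U i)" if "i \<le> n" for i using assms(3) that .
  define RR where "RR m = (\<Union>i\<in>{n-m..n}. U i)" for m
  have RRo: "openin X (RR m)" for m unfolding RR_def using Uo by auto
  have main: "\<exists>V s K. openin X V \<and> F \<subseteq> V \<and> V \<subseteq> RR m \<and>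
      continuous_map (subtopology X V) (ganea_top X A m) s \<and>
      continuous_map (prod_topology (subtopology X V) (top_of_set {0..1::real})) X K \<and>
      (\<forall>x\<in>V. K(x,0) = x \<and> K(x,1) = gmap (s x)) \<and>
      (\<forall>x\<in>V. x \<notin> (\<Union>i\<in>{n-m+1..n}. U i) \<longrightarrow> s x = Pt (HH (n-m) (x,1)))"
    if "m \<le> n" "closedin X F" "F \<subseteq> RR m" for m F
    using that
  proof (induction m arbitrary: F)
    case 0
    have R0: "RR 0 = U n" by (simp add: RR_def)
    have a: "continuous_map (subtopology X (U n)) (subtopology X A) (\<lambda>x. HH n (x,1))"
      using slice_cont[OF HHc[of n] order.refl, of 1] HH01[of n] unfolding continuous_map_in_subtopology by auto
    have sc: "continuous_map (subtopology X (U n)) (ganea_top X A 0) (\<lambda>x. Pt (HH n (x,1)))"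
      using continuous_map_compose[OF a Pt_cont_0[OF AX]] by (simp add: o_def)
    show ?case
      by (rule exI[where x="U n"], rule exI[where x="\<lambda>x. Pt (HH n (x,1))"], rule exI[where x="HH n"])
        (use Uo[of n] 0 R0 sc HHc[of n] HH01[of n] in auto)
  next
    case (Suc m)
    define j where "j = n - Suc m"
    have j: "n - m = Suc j" using Suc.prems(1) by (simp add: j_def)
    have jn: "j \<le> n" by (simp add: j_def)
    have ivl: "{j..n} = insert j {Suc j..n}" using jn by auto
    have RRS: "RR (Suc m) = U j \<union> RR m"
      unfolding RR_def j_def[symmetric] j ivl by simp
    have cl: "closedin X (F - U j)" using Suc.prems(2) Uo[OF jn] by (rule closedin_diff)
    have sub: "F - U j \<subseteq> RR m" using Suc.prems(3) RRS by blast
    have exW: "\<exists>W. openin X W \<and> F - U j \<subseteq> W \<and> X closure_of W \<subseteq> RR m"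
      using nX[unfolded normal_space_alt, rule_format, OF conjI[OF cl conjI[OF RRo sub]]] .
    then obtain W where W: "openin X W" "F - U j \<subseteq> W" "X closure_of W \<subseteq> RR m"
      by blast
    define F' where "F' = X closure_of W"
    have F'c: "closedin X F'" by (simp add: F'_def)
    have F'R: "F' \<subseteq> RR m" using W(3) by (simp add: F'_def)
    have exIH: "\<exists>V s K. openin X V \<and> F' \<subseteq> V \<and> V \<subseteq> RR m \<and>
      continuous_map (subtopology X V) (ganea_top X A m) s \<and>
      continuous_map (prod_topology (subtopology X V) (top_of_set {0..1::real})) X K \<and>
      (\<forall>x\<in>V. K(x,0) = x \<and> K(x,1) = gmap (s x)) \<and>
      (\<forall>x\<in>V. x \<notin> (\<Union>i\<in>{n-m+1..n}. U i) \<longrightarrow> s x = Pt (HH (n-m) (x,1)))"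
    proof (rule Suc.IH)
      show "m \<le> n" using Suc.prems(1) by simp
    qed (rule F'c, rule F'R)
    then obtain V' s' K' where V': "openin X V'" "F' \<subseteq> V'" "V' \<subseteq> RR m"
      and s'c: "continuous_map (subtopology X V') (ganea_top X A m) s'"
      and K'c: "continuous_map (prod_topology (subtopology X V') (top_of_set {0..1::real})) X K'"
      and K'01: "\<forall>x\<in>V'. K'(x,0) = x \<and> K'(x,1) = gmap (s' x)"
      by (elim exE conjE) (rule that; assumption)
    define C where "C = F - W"
    have Cc: "closedin X C" unfolding C_def using Suc.prems(2) W(1) by (rule closedin_diff)
    have CU: "C \<subseteq> U j" using W(2) unfolding C_def by blast
    have exJ: "\<exists>V s K. openin X V \<and> C \<union> F' \<subseteq> V \<and> V \<subseteq> U j \<union> V' \<and>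
     continuous_map (subtopology X V) (join_top X A (ganea_top X A m)) s \<and>
     continuous_map (prod_topology (subtopology X V) (top_of_set {0..1::real})) X K \<and>
     (\<forall>x\<in>V. K(x,0) = x \<and> K(x,1) = gmap (s x)) \<and> (\<forall>x\<in>V. x \<notin> V' \<longrightarrow> s x = Pt (HH j (x,1)))"
      by (rule join_step[OF nX AX Uo[OF jn] HHc[OF jn] HH01[OF jn] V'(1) s'c K'c K'01 F'c V'(2) Cc CU])
    then obtain V s K where V: "openin X V" "C \<union> F' \<subseteq> V" "V \<subseteq> U j \<union> V'"
      and sc: "continuous_map (subtopology X V) (join_top X A (ganea_top X A m)) s"
      and Kc: "continuous_map (prod_topology (subtopology X V) (top_of_set {0..1::real})) X K"
      and K01: "\<forall>x\<in>V. K(x,0) = x \<and> K(x,1) = gmap (s x)"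
      and sl: "\<forall>x\<in>V. x \<notin> V' \<longrightarrow> s x = Pt (HH j (x,1))"
      by (elim exE conjE) (rule that; assumption)
    have WX: "W \<subseteq> topspace X" using W(1) by (rule openin_subset)
    have FV: "F \<subseteq> V"
    proof
      fix x assume "x \<in> F"
      have "W \<subseteq> F'" unfolding F'_def by (rule closure_of_subset[OF WX])
      then have "x \<in> C \<union> F'" using \<open>x \<in> F\<close> unfolding C_def by (cases "x \<in> W") auto
      then show "x \<in> V" using V(2) by blast
    qed
    have VR: "V \<subseteq> RR (Suc m)" using V(3) V'(3) RRS by blast
    have e1: "n - Suc m + 1 = n - m" using j by (simp add: j_def)
    have RRm: "(\<Union>i\<in>{n - Suc m + 1..n}. U i) = RR m" unfolding e1 RR_def ..
    have sl': "\<forall>x\<in>V. x \<notin> (\<Union>i\<in>{n - Suc m + 1..n}. U i) \<longrightarrow> s x = Pt (HH (n - Suc m) (x,1))"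
    proof (intro ballI impI)
      fix x assume x: "x \<in> V" "x \<notin> (\<Union>i\<in>{n - Suc m + 1..n}. U i)"
      have "x \<notin> RR m" using x(2) unfolding RRm .
      then have "x \<notin> V'" using V'(3) by blast
      then have "s x = Pt (HH j (x,1))" using sl x(1) by simp
      then show "s x = Pt (HH (n - Suc m) (x,1))" by (simp only: j_def)
    qed
    have sc': "continuous_map (subtopology X V) (ganea_top X A (Suc m)) s" using sc by simp
    show ?case
      by (rule exI[where x=V], rule exI[where x=s], rule exI[where x=K]) (intro conjI V(1) FV VR sc' Kc K01 sl')
  qed
  have RRn: "RR n = topspace X"
  proof -
    have "{0..n} = {..n}" by auto
    then show ?thesis using assms(4) by (simp add: RR_def)
  qed
  obtain V s K where V: "openin X V" "topspace X \<subseteq> V" "V \<subseteq> RR n"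
    and sc: "continuous_map (subtopology X V) (ganea_top X A n) s"
    and Kc: "continuous_map (prod_topology (subtopology X V) (top_of_set {0..1::real})) X K"
    and K01: "\<forall>x\<in>V. K(x,0) = x \<and> K(x,1) = gmap (s x)"
    and sl: "\<forall>x\<in>V. x \<notin> (\<Union>i\<in>{n-n+1..n}. U i) \<longrightarrow> s x = Pt (HH (n-n) (x,1))"
  proof -
    have "\<exists>V s K. openin X V \<and> topspace X \<subseteq> V \<and> V \<subseteq> RR n \<and>
      continuous_map (subtopology X V) (ganea_top X A n) s \<and>
      continuous_map (prod_topology (subtopology X V) (top_of_set {0..1::real})) X K \<and>
      (\<forall>x\<in>V. K(x,0) = x \<and> K(x,1) = gmap (s x)) \<and>
      (\<forall>x\<in>V. x \<notin> (\<Union>i\<in>{n-n+1..n}. U i) \<longrightarrow> s x = Pt (HH (n-n) (x,1)))"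
      by (rule main) (simp_all add: RRn)
    then show ?thesis by (elim exE conjE) (rule that; assumption)
  qed
  have VX: "V = topspace X" using V RRn by auto
  have sX: "continuous_map X (ganea_top X A n) s" using sc VX by simp
  have KX: "continuous_map (prod_topology X (top_of_set {0..1::real})) X K" using Kc VX by simp
  have h1: "homotopic_with (\<lambda>_. True) X X (\<lambda>x. K (x,0)) (\<lambda>x. K (x,1))"
    unfolding homotopic_with_def
  proof (intro exI conjI)
    have "continuous_map (prod_topology (top_of_set {0..1::real}) X) (prod_topology X (top_of_set {0..1::real})) (\<lambda>p. (snd p, fst p))"
      by (intro continuous_map_pairedI continuous_map_snd continuous_map_fst)
    from continuous_map_compose[OF this KX]
    show "continuous_map (prod_topology (top_of_set {0..1::real}) X) X (\<lambda>p. K (snd p, fst p))"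
      by (simp add: o_def)
  qed auto
  have hom1: "homotopic_with (\<lambda>_. True) X X (gmap \<circ> s) id"
    by (rule homotopic_with_eq[OF homotopic_with_symD[OF h1]]) (use K01 VX in auto)
  have PtC: "continuous_map (subtopology X A) (ganea_top X A n) Pt"
  proof (cases n)
    case 0 then show ?thesis using Pt_cont_0[OF AX] by simp
  next
    case (Suc k) then show ?thesis using Pt_cont_join[OF AX] by simp
  qed
  have h2: "homotopic_with (\<lambda>_. True) (subtopology X A) (ganea_top X A n) (Pt \<circ> (\<lambda>a. H0 (a, 1))) (Pt \<circ> id)"
    by (rule homotopic_with_compose_continuous_map_left[OF H0h PtC]) auto
  have sA: "s x = Pt (H0 (x,1))" if "x \<in> A" for x
  proof -
    have "x \<in> V" using that AX VX by auto
    moreover have "x \<notin> (\<Union>i\<in>{n-n+1..n}. U i)"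
    proof
      assume "x \<in> (\<Union>i\<in>{n-n+1..n}. U i)"
      then obtain i where i: "1 \<le> i" "i \<le> n" "x \<in> U i" by auto
      then have "U i \<inter> A = {}" using assms(7) by blast
      then show False using i(3) that by blast
    qed
    ultimately show ?thesis using sl by (simp add: HH_def)
  qed
  have hom2: "homotopic_with (\<lambda>_. True) (subtopology X A) (ganea_top X A n) s Pt"
    by (rule homotopic_with_eq[OF h2]) (use sA in auto)
  have "ganea_section X A n"
    unfolding ganea_section_def using sX hom1 hom2 by blast
  then show ?thesis
    unfolding relcat_def by (simp add: INF_lower)
qed

end
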